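(* Let $\beta,\kappa>0$, let $V$ be as in the context, and set $\widetilde h(r):=r^{-(d-2)/2}K_{(d-2)/(2\beta)}\big(\frac{\sqrt\kappa}{\beta r^\beta}\big)$ for $r>0$. (i) Suppose there exist $\beta'\in(0,\beta)$ and $C_1>0$ with $V(x)\ge\kappa|x|^{-2-2\beta}-C_1|x|^{-2-\beta'}$ for all $0<|x|\le1$, and let $u_1(r):=(2-r^{(\beta-\beta')/2})\widetilde h(r)$. Then (a) $\widetilde h(|x|)\le u_1(|x|)\le2\widetilde h(|x|)$ for all $x\in\mathbb{R}^d_0$ with $|x|\le1$; and (b) there exists $R_1\in(0,1]$ such that $(\Delta-V)(u_1(|\cdot|))(x)\le0$ for all $x\in\mathbb{R}^d_0$ with $|x|\le R_1$. (ii) Suppose there exist $\beta'\in(0,\beta)$ and $C_2>0$ with $V(x)\le\kappa|x|^{-2-2\beta}+C_2|x|^{-2-\beta'}$ for all $0<|x|\le1$, and let $u_2(r):=(1+r^{(\beta-\beta')/2})\widetilde h(r)$. Then (a) $\widetilde h(|x|)\le u_2(|x|)\le2\widetilde h(|x|)$ for all $x\in\mathbb{R}^d_0$ with $|x|\le1$; and (b) there exists $R_2\in(0,1]$ such that $(\Delta-V)(u_2(|\cdot|))(x)\ge0$ for all $x\in\mathbb{R}^d_0$ with $|x|\le R_2$.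
   Context: $d\ge1$, $\mathbb{R}^d_0:=\mathbb{R}^d\setminus\{0\}$; $V$ is a non-negative locally bounded Borel function on $\mathbb{R}^d_0$ with $\sup_{|x|\ge1}V(x)<\infty$ and $\int_{B(0,1)\setminus\{0\}}V(x)dx=\infty$. $K_\nu$ denotes the modified Bessel function of the second kind of order $\nu$. $\Delta$ is the Laplacian, applied classically to the smooth function $x\mapsto u(|x|)$ on $\mathbb{R}^d_0$. *)

theory Defs
  imports "HOL-Analysis.Analysis"
begin

text \<open>Modified Bessel function of the second kind, via the standard integral
representation  K_nu(z) = int_0^infty exp(-z cosh t) cosh(nu t) dt  (z > 0).\<close>
definition besselK :: "real \<Rightarrow> real \<Rightarrow> real" where
  "besselK \<nu> z = (LBINT t:{0..}. exp (- z * cosh t) * cosh (\<nu> * t))"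

definition laplacian :: "('a::euclidean_space \<Rightarrow> real) \<Rightarrow> 'a \<Rightarrow> real" where
  "laplacian f x = (\<Sum>b\<in>Basis. deriv (\<lambda>s. deriv (\<lambda>t. f (x + t *\<^sub>R b)) s) 0)"

definition htilde :: "nat \<Rightarrow> real \<Rightarrow> real \<Rightarrow> real \<Rightarrow> real" where
  "htilde d \<beta> \<kappa> r =
     r powr (- (real d - 2) / 2) * besselK ((real d - 2) / (2 * \<beta>)) (sqrt \<kappa> / (\<beta> * r powr \<beta>))"

text \<open>Standing assumptions on the potential V (values at 0 are irrelevant).\<close>
definition admissible_potential :: "('a::euclidean_space \<Rightarrow> real) \<Rightarrow> bool" where
  "admissible_potential V \<longleftrightarrow>
     (\<forall>x. x \<noteq> 0 \<longrightarrow> V x \<ge> 0) \<and>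
     V \<in> borel_measurable borel \<and>
     (\<forall>K. compact K \<and> K \<subseteq> - {0} \<longrightarrow> bounded (V ` K)) \<and>
     (\<exists>M. \<forall>x. norm x \<ge> 1 \<longrightarrow> V x \<le> M) \<and>
     (\<integral>\<^sup>+ x. ennreal (V x) * indicator (ball 0 1 - {0}) x \<partial>lborel) = \<infinity>"

end

theory Submission
  imports Defs "HOL-Probability.Sinc_Integral"
begin


definition EE :: "real \<Rightarrow> nat \<Rightarrow> real \<Rightarrow> real \<Rightarrow> real" where
  "EE \<nu> k s t = cosh t ^ k * (exp (- s * cosh t) * cosh (\<nu> * t))"

definition GG :: "real \<Rightarrow> nat \<Rightarrow> real \<Rightarrow> real" where
  "GG \<nu> k s = (LBINT t:{0..}. EE \<nu> k s t)"

lemma GG0: "GG \<nu> 0 s = besselK \<nu> s"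
  by (simp add: GG_def EE_def besselK_def)

lemma cosh_le_exp_abs: "cosh (x::real) \<le> exp \<bar>x\<bar>"
proof -
  have "cosh x = (exp x + exp (-x)) / 2" by (simp add: cosh_def)
  moreover have "exp x \<le> exp \<bar>x\<bar>" "exp (-x) \<le> exp \<bar>x\<bar>" by auto
  ultimately show ?thesis by argo
qed

lemma cosh_ge_sq: "cosh (t::real) \<ge> t^2 / 8"
proof -
  have "cosh t = (exp t + exp (-t)) / 2" by (simp add: cosh_def)
  have a: "exp \<bar>t\<bar> = exp (\<bar>t\<bar>/2) ^ 2" by (simp add: power2_eq_square flip: exp_add)
  have "1 + \<bar>t\<bar>/2 \<le> exp (\<bar>t\<bar>/2)" by (rule exp_ge_add_one_self)
  then have "(1 + \<bar>t\<bar>/2)^2 \<le> exp (\<bar>t\<bar>/2) ^ 2" by (intro power_mono) auto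
  moreover have "t^2/4 \<le> (1 + \<bar>t\<bar>/2)^2" by (simp add: power2_eq_square field_simps)
  moreover have "exp \<bar>t\<bar> \<le> exp t + exp (-t)" by (cases "t \<ge> 0") auto
  ultimately show ?thesis using a \<open>cosh t = _\<close> by argo
qed

lemma EE_nonneg: "EE \<nu> k s t \<ge> 0"
  unfolding EE_def by (intro mult_nonneg_nonneg zero_le_power) (auto intro: order_trans[OF _ cosh_real_ge_1])

lemma EE_bound:
  assumes "s > 0" "t \<ge> 0"
  shows "EE \<nu> k s t \<le> exp (2 * (k + \<bar>\<nu>\<bar> + 1)^2 / s) * exp (- t)"
proof -
  define m where "m = k + \<bar>\<nu>\<bar> + 1"
  have c0: "cosh t \<ge> 0" using cosh_real_ge_1[of t] by linarith
  have "cosh t ^ k \<le> exp t ^ k" using cosh_le_exp_abs[of t] assms c0 by (intro power_mono) auto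
  also have "\<dots> = exp (k * t)" by (simp add: exp_of_nat_mult)
  finally have 1: "cosh t ^ k \<le> exp (k * t)" .
  have 2: "cosh (\<nu> * t) \<le> exp (\<bar>\<nu>\<bar> * t)" using cosh_le_exp_abs[of "\<nu>*t"] assms by (simp add: abs_mult)
  have 3: "exp (- s * cosh t) \<le> exp (- s * (t^2/8))" using cosh_ge_sq[of t] assms by simp
  have "EE \<nu> k s t \<le> exp (k * t) * (exp (- s * (t^2/8)) * exp (\<bar>\<nu>\<bar> * t))"
    unfolding EE_def using 1 2 3 c0
    by (intro mult_mono) (auto intro: order_trans[OF _ cosh_real_ge_1])
  also have "\<dots> = exp (m * t - s * t^2 / 8) * exp (- t)"
    by (simp add: m_def flip: exp_add) (simp add: algebra_simps)
  also have "\<dots> \<le> exp (2 * m^2 / s) * exp (- t)"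
  proof -
    have "0 \<le> (s/8) * (t - 4*m/s)^2" using assms by simp
    also have "(s/8) * (t - 4*m/s)^2 = s*t^2/8 - m*t + 2*m^2/s" using assms
      by (simp add: power2_eq_square field_simps)
    finally have "m * t - s * t^2 / 8 \<le> 2 * m^2 / s" by simp
    then show ?thesis by simp
  qed
  finally show ?thesis by (simp add: m_def)
qed

lemma integrable_exp_minus: "set_integrable lborel {0..} (\<lambda>t::real. exp (- t))"
  using has_bochner_integral_I0i_power_exp_m'[of 0]
  by (auto simp: set_integrable_def integrable.intros mult.commute)

lemma EE_cont: "continuous_on UNIV (EE \<nu> k s)"
  unfolding EE_def by (intro continuous_intros)

lemma EE_integrable:
  assumes "s > 0"
  shows "set_integrable lborel {0..} (EE \<nu> k s)"
proof -
  have "set_integrable lborel {0..} (\<lambda>t. exp (2 * (k + \<bar>\<nu>\<bar> + 1)^2 / s) * exp (- t))"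
    using integrable_exp_minus by (rule set_integrable_mult_right)
  then show ?thesis
    unfolding set_integrable_def
  proof (rule Bochner_Integration.integrable_bound)
    show "(\<lambda>x. indicat_real {0..} x *\<^sub>R EE \<nu> k s x) \<in> borel_measurable lborel"
      unfolding measurable_lborel2 by (intro borel_measurable_continuous_on_indicator continuous_on_subset[OF EE_cont]) auto
    show "AE x in lborel. norm (indicat_real {0..} x *\<^sub>R EE \<nu> k s x)
        \<le> norm (indicat_real {0..} x *\<^sub>R (exp (2 * (k + \<bar>\<nu>\<bar> + 1)^2 / s) * exp (- x)))"
      using EE_bound[OF assms] EE_nonneg by (auto simp: indicator_def)
  qed
qed


lemma exp_taylor2: "\<bar>exp (y::real) - 1 - y\<bar> \<le> y^2 * exp \<bar>y\<bar>"
proof -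
  obtain t where t: "\<bar>t\<bar> \<le> \<bar>y\<bar>" "exp y = (\<Sum>m<2. y ^ m / fact m) + exp t / fact 2 * y ^ 2"
    using Maclaurin_exp_le[of y 2] by blast
  have "(\<Sum>m<2. y ^ m / fact m) = 1 + y" by (simp add: eval_nat_numeral)
  then have e: "exp y - 1 - y = exp t / 2 * y^2" using t by simp
  have "exp t \<le> exp \<bar>y\<bar>" using t(1) by simp
  then have "exp t * y^2 \<le> exp \<bar>y\<bar> * y^2" by (rule mult_right_mono) simp
  moreover have "0 \<le> exp \<bar>y\<bar> * y^2" by simp
  ultimately have l: "exp t / 2 * y^2 \<le> exp \<bar>y\<bar> * y^2" by linarith
  have "0 \<le> exp t / 2 * y^2" by simp
  then have "\<bar>exp y - 1 - y\<bar> = exp t / 2 * y^2" unfolding e by (rule abs_of_nonneg)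
  also have "\<dots> \<le> exp \<bar>y\<bar> * y^2" by (rule l)
  finally show ?thesis by (simp only: mult.commute)
qed

lemma EE_taylor:
  assumes "s > 0" "\<bar>h\<bar> \<le> s/2"
  shows "\<bar>EE \<nu> k (s+h) t - EE \<nu> k s t + h * EE \<nu> (Suc k) s t\<bar> \<le> h^2 * EE \<nu> (k+2) (s/2) t"
proof -
  define c where "c = cosh t"
  have c1: "c \<ge> 1" using cosh_real_ge_1 by (simp add: c_def)
  have eq: "EE \<nu> k (s+h) t - EE \<nu> k s t + h * EE \<nu> (Suc k) s t
      = c^k * cosh (\<nu>*t) * exp (- s * c) * (exp (- h * c) - 1 - (- h * c))"
    by (simp add: EE_def c_def algebra_simps flip: exp_add)
  have cn: "cosh (\<nu>*t) \<ge> 0" using cosh_real_ge_1[of "\<nu>*t"] by linarith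
  have "\<bar>exp (- h * c) - 1 - (- h * c)\<bar> \<le> (h*c)^2 * exp (\<bar>h\<bar> * c)"
    using exp_taylor2[of "-h*c"] c1 by (simp add: abs_mult power2_eq_square)
  moreover have A0: "0 \<le> c^k * cosh (\<nu>*t) * exp (- s * c)" using c1 cn by simp
  ultimately have "\<bar>EE \<nu> k (s+h) t - EE \<nu> k s t + h * EE \<nu> (Suc k) s t\<bar>
      \<le> c^k * cosh (\<nu>*t) * exp (- s * c) * ((h*c)^2 * exp (\<bar>h\<bar> * c))"
    unfolding eq abs_mult[of "c^k * cosh (\<nu>*t) * exp (- s * c)"] abs_of_nonneg[OF A0]
    by (intro mult_left_mono)
  also have "\<dots> = h^2 * (c^(k+2) * cosh (\<nu>*t) * exp (-(s - \<bar>h\<bar>) * c))"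
    by (simp add: power2_eq_square algebra_simps flip: exp_add)
  also have "\<dots> \<le> h^2 * (c^(k+2) * cosh (\<nu>*t) * exp (-(s/2) * c))"
  proof -
    have "(\<bar>h\<bar> - s) * c \<le> (- s/2) * c" using c1 assms by (intro mult_right_mono) auto
    then have "exp (-(s - \<bar>h\<bar>) * c) \<le> exp (-(s/2) * c)" by simp
    then show ?thesis using c1 cn by (intro mult_left_mono) auto
  qed
  also have "\<dots> = h^2 * EE \<nu> (k+2) (s/2) t" by (simp add: EE_def c_def)
  finally show ?thesis .
qed

lemma GG_taylor:
  assumes "s > 0" "\<bar>h\<bar> \<le> s/2"
  shows "\<bar>GG \<nu> k (s+h) - GG \<nu> k s + h * GG \<nu> (Suc k) s\<bar> \<le> h^2 * GG \<nu> (k+2) (s/2)"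
proof -
  have sh: "s + h > 0" using assms by auto
  note I = EE_integrable[OF sh, of \<nu> k] EE_integrable[OF assms(1), of \<nu> k]
           EE_integrable[OF assms(1), of \<nu> "Suc k"]
  have I2: "set_integrable lborel {0..} (EE \<nu> (k+2) (s/2))" using assms by (intro EE_integrable) auto
  define D where "D t = EE \<nu> k (s+h) t - EE \<nu> k s t + h * EE \<nu> (Suc k) s t" for t
  have ID: "set_integrable lborel {0..} D"
    unfolding D_def by (intro set_integral_add set_integral_diff set_integrable_mult_right I)
  have eqD: "GG \<nu> k (s+h) - GG \<nu> k s + h * GG \<nu> (Suc k) s = (LBINT t:{0..}. D t)"
    unfolding D_def GG_def
    by (subst set_integral_add set_integral_diff, (intro set_integral_add set_integral_diff set_integrable_mult_right I)+)+ simp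
  have bnd: "\<bar>D t\<bar> \<le> h^2 * EE \<nu> (k+2) (s/2) t" for t
    using EE_taylor[OF assms, of \<nu> k] by (simp add: D_def)
  have up: "(LBINT t:{0..}. D t) \<le> (LBINT t:{0..}. h^2 * EE \<nu> (k+2) (s/2) t)"
    using bnd ID I2
    by (intro set_integral_mono set_integrable_mult_right) (auto simp: abs_le_iff)
  define nh where "nh = -(h^2)"
  have lo: "nh * EE \<nu> (k+2) (s/2) t \<le> D t" for t
    using bnd[of t] unfolding nh_def abs_le_iff by linarith
  have "(LBINT t:{0..}. nh * EE \<nu> (k+2) (s/2) t) \<le> (LBINT t:{0..}. D t)"
    using bnd ID I2
    by (intro set_integral_mono set_integrable_mult_right lo)
  moreover have "(LBINT t:{0..}. nh * EE \<nu> (k+2) (s/2) t) = - (h^2 * GG \<nu> (k+2) (s/2))"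
    unfolding GG_def set_integral_mult_right nh_def by simp
  moreover have "(LBINT t:{0..}. h^2 * EE \<nu> (k+2) (s/2) t) = h^2 * GG \<nu> (k+2) (s/2)"
    by (simp add: GG_def)
  ultimately have "\<bar>LBINT t:{0..}. D t\<bar> \<le> h^2 * GG \<nu> (k+2) (s/2)"
    using up unfolding abs_le_iff by linarith
  then show ?thesis unfolding eqD .
qed

lemma GG_deriv:
  assumes "s > 0"
  shows "(GG \<nu> k has_real_derivative - GG \<nu> (Suc k) s) (at s)"
proof -
  define M where "M = GG \<nu> (k+2) (s/2)"
  have "((\<lambda>h. (GG \<nu> k (s+h) - GG \<nu> k s) / h - (- GG \<nu> (Suc k) s)) \<longlongrightarrow> 0) (at 0)"
  proof (rule Lim_null_comparison)
    show "((\<lambda>h. \<bar>h\<bar> * M) \<longlongrightarrow> 0) (at 0)"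
      by (auto intro!: tendsto_eq_intros)
    show "eventually (\<lambda>h. norm ((GG \<nu> k (s+h) - GG \<nu> k s) / h - (- GG \<nu> (Suc k) s)) \<le> \<bar>h\<bar> * M) (at 0)"
      unfolding eventually_at
    proof (intro exI[of _ "s/2"] conjI ballI impI)
      show "s/2 > 0" using assms by simp
      fix h :: real assume "h \<in> UNIV" "h \<noteq> 0 \<and> dist h 0 < s/2"
      then have h: "h \<noteq> 0" "\<bar>h\<bar> \<le> s/2" by (auto simp: dist_real_def)
      have "(GG \<nu> k (s+h) - GG \<nu> k s) / h - (- GG \<nu> (Suc k) s)
          = (GG \<nu> k (s+h) - GG \<nu> k s + h * GG \<nu> (Suc k) s) / h"
        using h by (simp add: field_simps)
      also have "norm \<dots> \<le> h^2 * M / \<bar>h\<bar>"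
        using GG_taylor[OF assms h(2), of \<nu> k] h
        by (simp add: M_def abs_divide divide_right_mono)
      also have "\<dots> = \<bar>h\<bar> * M" using h by (simp add: power2_eq_square field_simps)
      finally show "norm ((GG \<nu> k (s+h) - GG \<nu> k s) / h - (- GG \<nu> (Suc k) s)) \<le> \<bar>h\<bar> * M" .
    qed
  qed
  then show ?thesis
    unfolding DERIV_def by (rule LIM_zero_cancel)
qed


lemma abs_sinh_le_cosh: "\<bar>sinh (x::real)\<bar> \<le> cosh x"
proof -
  have "cosh \<bar>x\<bar> = cosh x" by (cases "x \<ge> 0") auto
  then show ?thesis using sinh_le_cosh_real[of "\<bar>x\<bar>"] sinh_real_abs[of x] by simp
qed

lemma set_integral_Ici_Ioi:
  assumes "set_integrable lborel {0..} (f :: real \<Rightarrow> real)"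
  shows "(LBINT t:{0<..}. f t) = (LBINT t:{0..}. f t)"
proof (rule set_integral_cong_set)
  have "set_integrable lborel {0<..} f" using assms by (rule set_integrable_subset) auto
  then show "set_borel_measurable lborel {0<..} f" "set_borel_measurable lborel {0..} f"
    using assms unfolding set_integrable_def set_borel_measurable_def by auto
  show "AE x in lborel. ((x::real) \<in> {0..}) = (x \<in> {0<..})"
    using AE_lborel_singleton[of "0::real"] by eventually_elim (auto simp: less_le)
qed

lemma GG_ode:
  assumes s: "s > 0"
  shows "s^2 * (GG \<nu> 2 s - GG \<nu> 0 s) - s * GG \<nu> 1 s - \<nu>^2 * GG \<nu> 0 s = 0"
proof -
  define f where "f t = s^2 * (EE \<nu> 2 s t - EE \<nu> 0 s t) - s * EE \<nu> 1 s t - \<nu>^2 * EE \<nu> 0 s t" for t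
  define F where "F t = - s * sinh t * exp (- s * cosh t) * cosh (\<nu> * t) - \<nu> * exp (- s * cosh t) * sinh (\<nu> * t)" for t
  have If: "set_integrable lborel {0..} f"
    unfolding f_def using s
    by (intro set_integral_diff set_integrable_mult_right EE_integrable) auto
  have "(LBINT t=0..\<infinity>. f t) = 0 - 0"
  proof (rule interval_integral_FTC_integrable)
    show "(0::ereal) < \<infinity>" by simp
    fix x :: real
    have "(F has_real_derivative f x) (at x)"
    proof -
      have "(F has_real_derivative
         (- s * cosh x * exp (- s * cosh x) * cosh (\<nu> * x)
          + s^2 * sinh x ^ 2 * exp (- s * cosh x) * cosh (\<nu> * x)
          - \<nu>^2 * exp (- s * cosh x) * cosh (\<nu> * x))) (at x)"
        unfolding F_def
        by (rule derivative_eq_intros refl | simp)+ (simp add: algebra_simps power2_eq_square)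
      moreover have "f x = - s * cosh x * exp (- s * cosh x) * cosh (\<nu> * x)
          + s^2 * sinh x ^ 2 * exp (- s * cosh x) * cosh (\<nu> * x)
          - \<nu>^2 * exp (- s * cosh x) * cosh (\<nu> * x)"
        unfolding f_def EE_def cosh_square_eq by (simp add: algebra_simps)
      ultimately show ?thesis by simp
    qed
    then show "(F has_vector_derivative f x) (at x)"
      by (simp add: has_real_derivative_iff_has_vector_derivative)
    show "isCont f x" unfolding f_def EE_def by (intro continuous_intros)
  next
    show "set_integrable lborel (einterval 0 \<infinity>) f"
    proof -
      have "set_integrable lborel {0<..} f" by (rule set_integrable_subset[OF If]) auto
      then show ?thesis by (simp add: zero_ereal_def)
    qed
    have "continuous_on UNIV F" unfolding F_def by (intro continuous_intros)
    then have "(F \<longlongrightarrow> F 0) (at_right 0)"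
      by (meson UNIV_I continuous_on_def filterlim_at_split)
    then show "((F \<circ> real_of_ereal) \<longlongrightarrow> 0) (at_right 0)"
      unfolding zero_ereal_def ereal_tendsto_simps1 by (simp add: F_def)
    have "(F \<longlongrightarrow> 0) at_top"
    proof (rule Lim_null_comparison)
      define K where "K = s * exp (2 * (1 + \<bar>\<nu>\<bar> + 1)^2 / s) + \<bar>\<nu>\<bar> * exp (2 * (0 + \<bar>\<nu>\<bar> + 1)^2 / s)"
      show "((\<lambda>t. K * exp (- t)) \<longlongrightarrow> 0) at_top"
        by real_asymp
      show "eventually (\<lambda>t. norm (F t) \<le> K * exp (- t)) at_top"
        using eventually_ge_at_top[of 0]
      proof eventually_elim
        case (elim t)
        have e: "exp (- s * cosh t) \<ge> 0" "cosh (\<nu>*t) \<ge> 0"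
          using cosh_real_ge_1[of "\<nu>*t"] by auto
        have "\<bar>F t\<bar> \<le> s * (cosh t * exp (- s * cosh t) * cosh (\<nu> * t))
                        + \<bar>\<nu>\<bar> * (exp (- s * cosh t) * cosh (\<nu> * t))"
        proof -
          have "\<bar>F t\<bar> \<le> s * (\<bar>sinh t\<bar> * exp (- s * cosh t) * cosh (\<nu> * t))
                        + \<bar>\<nu>\<bar> * (exp (- s * cosh t) * \<bar>sinh (\<nu> * t)\<bar>)"
          proof -
            have "\<bar>F t\<bar> \<le> \<bar>- s * sinh t * exp (- s * cosh t) * cosh (\<nu> * t)\<bar> + \<bar>\<nu> * exp (- s * cosh t) * sinh (\<nu> * t)\<bar>"
              unfolding F_def by (rule abs_triangle_ineq4)
            also have "\<dots> = s * (\<bar>sinh t\<bar> * exp (- s * cosh t) * cosh (\<nu> * t)) + \<bar>\<nu>\<bar> * (exp (- s * cosh t) * \<bar>sinh (\<nu> * t)\<bar>)"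
              using s e by (simp add: abs_mult)
            finally show ?thesis .
          qed
          moreover have "\<bar>sinh t\<bar> * exp (- s * cosh t) * cosh (\<nu> * t) \<le> cosh t * exp (- s * cosh t) * cosh (\<nu> * t)"
            using e by (intro mult_right_mono abs_sinh_le_cosh) auto
          moreover have "exp (- s * cosh t) * \<bar>sinh (\<nu> * t)\<bar> \<le> exp (- s * cosh t) * cosh (\<nu> * t)"
            using e by (intro mult_left_mono abs_sinh_le_cosh) auto
          ultimately show ?thesis using s
            by (smt (verit) mult_left_mono abs_ge_zero)
        qed
        also have "\<dots> = s * EE \<nu> 1 s t + \<bar>\<nu>\<bar> * EE \<nu> 0 s t" by (simp add: EE_def)
        also have "\<dots> \<le> s * (exp (2 * (1 + \<bar>\<nu>\<bar> + 1)^2 / s) * exp (- t))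
                        + \<bar>\<nu>\<bar> * (exp (2 * (0 + \<bar>\<nu>\<bar> + 1)^2 / s) * exp (- t))"
          using EE_bound[OF s elim, of \<nu> 1] EE_bound[OF s elim, of \<nu> 0] s
          by (intro add_mono mult_left_mono) auto
        also have "\<dots> = K * exp (- t)" by (simp add: K_def algebra_simps)
        finally show ?case by simp
      qed
    qed
    then show "((F \<circ> real_of_ereal) \<longlongrightarrow> 0) (at_left \<infinity>)"
      unfolding ereal_tendsto_simps1 .
  qed
  then have "(LBINT t:{0..}. f t) = 0"
    using set_integral_Ici_Ioi[OF If] by (simp add: interval_lebesgue_integral_0_infty)
  moreover have "(LBINT t:{0..}. f t) = s^2 * (GG \<nu> 2 s - GG \<nu> 0 s) - s * GG \<nu> 1 s - \<nu>^2 * GG \<nu> 0 s"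
  proof -
    note i = EE_integrable[OF s, of \<nu> 0] EE_integrable[OF s, of \<nu> 1] EE_integrable[OF s, of \<nu> 2]
    have j1: "set_integrable lborel {0..} (\<lambda>t. EE \<nu> 2 s t - EE \<nu> 0 s t)" using i by auto
    have j2: "set_integrable lborel {0..} (\<lambda>t. s^2 * (EE \<nu> 2 s t - EE \<nu> 0 s t))"
      using j1 by (rule set_integrable_mult_right)
    have j3: "set_integrable lborel {0..} (\<lambda>t. s * EE \<nu> 1 s t)" using i by (intro set_integrable_mult_right)
    have j4: "set_integrable lborel {0..} (\<lambda>t. \<nu>^2 * EE \<nu> 0 s t)" using i by (intro set_integrable_mult_right)
    have j5: "set_integrable lborel {0..} (\<lambda>t. s^2 * (EE \<nu> 2 s t - EE \<nu> 0 s t) - s * EE \<nu> 1 s t)"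
      using j2 j3 by auto
    show ?thesis unfolding f_def GG_def set_integral_diff(2)[OF j5 j4] set_integral_diff(2)[OF j2 j3]
          set_integral_mult_right set_integral_diff(2)[OF i(3) i(1)] ..
  qed
  ultimately show ?thesis by simp
qed



lemma norm_add_scaleR_basis:
  fixes x b :: "'a::euclidean_space"
  assumes "b \<in> Basis"
  shows "norm (x + t *\<^sub>R b) = sqrt (norm x ^ 2 + 2 * t * (x \<bullet> b) + t^2)"
proof -
  have "norm (x + t *\<^sub>R b) ^ 2 = (x + t *\<^sub>R b) \<bullet> (x + t *\<^sub>R b)" by (rule power2_norm_eq_inner)
  also have "\<dots> = x \<bullet> x + 2 * t * (x \<bullet> b) + t^2 * (b \<bullet> b)"
    by (simp add: inner_add_left inner_add_right inner_commute algebra_simps power2_eq_square)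
  also have "\<dots> = norm x ^ 2 + 2 * t * (x \<bullet> b) + t^2"
    using assms by (simp add: power2_norm_eq_inner)
  finally have "norm (x + t *\<^sub>R b) ^ 2 = norm x ^ 2 + 2 * t * (x \<bullet> b) + t^2" .
  then show ?thesis by (metis norm_ge_zero real_sqrt_unique)
qed

lemma laplacian_radial:
  fixes x :: "'a::euclidean_space" and u u1 u2 :: "real \<Rightarrow> real"
  assumes x: "x \<noteq> 0"
   and d1: "\<And>r. r > 0 \<Longrightarrow> (u has_real_derivative u1 r) (at r)"
   and d2: "\<And>r. r > 0 \<Longrightarrow> (u1 has_real_derivative u2 r) (at r)"
  shows "laplacian (\<lambda>y. u (norm y)) x = u2 (norm x) + (real DIM('a) - 1) / norm x * u1 (norm x)"
proof -
  define r where "r = norm x"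
  have r: "r > 0" using x by (simp add: r_def)
  have tm: "deriv (\<lambda>s. deriv (\<lambda>t. u (norm (x + t *\<^sub>R b))) s) 0
      = u2 r * (x \<bullet> b)^2 / r^2 + u1 r * (1 / r - (x \<bullet> b)^2 / r^3)" if b: "b \<in> Basis" for b
  proof -
    define p where "p = x \<bullet> b"
    define q where "q t = r^2 + 2 * t * p + t^2" for t
    have nq: "norm (x + t *\<^sub>R b) = sqrt (q t)" for t
      using norm_add_scaleR_basis[OF b, of x t] by (simp add: q_def p_def r_def)
    have qpos: "q t > 0" if "\<bar>t\<bar> < r" for t
    proof -
      have "norm x \<le> norm (x + t *\<^sub>R b) + norm (t *\<^sub>R b)"
        by (metis add_diff_cancel_left' norm_triangle_ineq4 add.commute)
      then have "r - \<bar>t\<bar> \<le> norm (x + t *\<^sub>R b)" using b by (simp add: r_def)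
      then have "sqrt (q t) > 0" using that nq[of t] by linarith
      then show ?thesis by simp
    qed
    define \<psi> where "\<psi> t = u1 (sqrt (q t)) * ((p + t) / sqrt (q t))" for t
    have dphi: "((\<lambda>t. u (norm (x + t *\<^sub>R b))) has_real_derivative \<psi> t) (at t)" if "\<bar>t\<bar> < r" for t
    proof -
      have qt: "q t > 0" using qpos that by auto
      have dq: "(q has_real_derivative 2 * p + 2 * t) (at t)"
        unfolding q_def by (auto intro!: derivative_eq_intros)
      have ds: "((\<lambda>t. sqrt (q t)) has_real_derivative inverse (sqrt (q t)) / 2 * (2 * p + 2 * t)) (at t)"
        by (rule DERIV_chain2[OF DERIV_real_sqrt[OF qt] dq])
      have "((\<lambda>t. u (sqrt (q t))) has_real_derivative u1 (sqrt (q t)) * (inverse (sqrt (q t)) / 2 * (2 * p + 2 * t))) (at t)"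
        by (rule DERIV_chain2[OF d1 ds]) (use qt in simp)
      moreover have "u1 (sqrt (q t)) * (inverse (sqrt (q t)) / 2 * (2 * p + 2 * t)) = \<psi> t"
        unfolding \<psi>_def using qt by (simp add: field_simps)
      ultimately have "((\<lambda>t. u (sqrt (q t))) has_real_derivative \<psi> t) (at t)" by simp
      then show ?thesis unfolding nq .
    qed
    have eqd: "deriv (\<lambda>t. u (norm (x + t *\<^sub>R b))) s = \<psi> s" if "s \<in> ball 0 r" for s
      using dphi[of s] that by (intro DERIV_imp_deriv) (simp add: dist_real_def)
    have q0: "q 0 = r^2" by (simp add: q_def)
    have sq0: "sqrt (q 0) = r" using r q0 by simp
    have q0p: "q 0 > 0" using q0 r by simp
    have dq: "(q has_real_derivative 2 * p) (at 0)"
      unfolding q_def by (auto intro!: derivative_eq_intros)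
    have ds: "((\<lambda>t. sqrt (q t)) has_real_derivative p / r) (at 0)"
      using DERIV_chain2[OF DERIV_real_sqrt[OF q0p] dq] sq0 r by (simp add: field_simps)
    have du: "((\<lambda>t. u1 (sqrt (q t))) has_real_derivative u2 r * (p / r)) (at 0)"
      using DERIV_chain2[OF d2 ds] sq0 r by simp
    have dv: "((\<lambda>t. (p + t) / sqrt (q t)) has_real_derivative ((1 * r - p * (p / r)) / (r * r))) (at 0)"
      using DERIV_divide[OF DERIV_add[OF DERIV_const[of p] DERIV_ident] ds] sq0 r by simp
    have "(\<psi> has_real_derivative u2 r * (p / r) * (p / r) + u1 r * ((1 * r - p * (p / r)) / (r * r))) (at 0)"
      unfolding \<psi>_def using DERIV_mult[OF du dv] sq0 by (simp add: mult.commute)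
    then have "(\<psi> has_real_derivative u2 r * (x \<bullet> b)^2 / r^2 + u1 r * (1 / r - (x \<bullet> b)^2 / r^3)) (at 0)"
      unfolding sq0 p_def using r by (simp add: field_simps power2_eq_square power3_eq_cube)
    then have "((\<lambda>s. deriv (\<lambda>t. u (norm (x + t *\<^sub>R b))) s) has_real_derivative
        u2 r * (x \<bullet> b)^2 / r^2 + u1 r * (1 / r - (x \<bullet> b)^2 / r^3)) (at 0)"
      by (rule has_field_derivative_transform_within_open[of _ _ _ "ball 0 r"]) (use r eqd in auto)
    then show ?thesis by (rule DERIV_imp_deriv)
  qed
  have sq: "(\<Sum>b\<in>Basis. (x \<bullet> b)^2) = r^2"
  proof -
    have "(\<Sum>b\<in>Basis. (x \<bullet> b)^2) = x \<bullet> x" by (simp add: euclidean_inner[of x x] power2_eq_square)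
    also have "\<dots> = r^2" by (simp add: r_def power2_norm_eq_inner)
    finally show ?thesis .
  qed
  have "laplacian (\<lambda>y. u (norm y)) x = (\<Sum>b\<in>Basis. u2 r * (x \<bullet> b)^2 / r^2 + u1 r * (1 / r - (x \<bullet> b)^2 / r^3))"
    unfolding laplacian_def by (intro sum.cong refl tm)
  also have "\<dots> = u2 r / r^2 * (\<Sum>b\<in>Basis. (x \<bullet> b)^2) + u1 r * (real DIM('a) / r - (\<Sum>b\<in>Basis. (x \<bullet> b)^2) / r^3)"
    by (simp add: sum.distrib sum_distrib_left sum_subtractf sum_divide_distrib[symmetric] algebra_simps)
  also have "\<dots> = u2 r + (real DIM('a) - 1) / r * u1 r"
    unfolding sq using r by (simp add: field_simps power2_eq_square power3_eq_cube)
  finally show ?thesis by (simp add: r_def)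
qed



lemma powr_deriv:
  assumes "r > 0"
  shows "((\<lambda>r. r powr e) has_real_derivative e * r powr e / r) (at r)"
proof -
  have "((\<lambda>r. r powr e) has_real_derivative e * r powr (e - 1)) (at r)"
    using assms by (rule has_real_derivative_powr)
  then show ?thesis using assms by (simp add: powr_diff)
qed

lemma prod_derivs:
  assumes "(f has_real_derivative f1 r) (at r)" "(f1 has_real_derivative f2 r) (at r)"
    "(h has_real_derivative h1 r) (at r)" "(h1 has_real_derivative h2 r) (at r)"
  shows "((\<lambda>r. f r * h r) has_real_derivative f1 r * h r + f r * h1 r) (at r)"
    and "((\<lambda>r. f1 r * h r + f r * h1 r) has_real_derivative f2 r * h r + 2 * f1 r * h1 r + f r * h2 r) (at r)"
proof -
  show "((\<lambda>r. f r * h r) has_real_derivative f1 r * h r + f r * h1 r) (at r)"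
    using DERIV_mult[OF assms(1,3)] by (simp add: mult.commute)
  show "((\<lambda>r. f1 r * h r + f r * h1 r) has_real_derivative f2 r * h r + 2 * f1 r * h1 r + f r * h2 r) (at r)"
    using DERIV_add[OF DERIV_mult[OF assms(2,3)] DERIV_mult[OF assms(1,4)]] by (simp add: algebra_simps)
qed

locale bes =
  fixes d :: nat and \<beta> \<kappa> :: real
  assumes \<beta>: "\<beta> > 0" and \<kappa>: "\<kappa> > 0"
begin

definition "a = (real d - 2) / 2"
definition "\<nu> = (real d - 2) / (2 * \<beta>)"
definition "S r = sqrt \<kappa> / (\<beta> * r powr \<beta>)" for r
definition "P r = r powr (- a)" for r
definition "G k r = GG \<nu> k (S r)" for k r
definition "Q r = - a * G 0 r + \<beta> * S r * G 1 r" for r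
definition "Q1 r = (- a * \<beta> * S r * G 1 r - \<beta>^2 * S r * G 1 r + \<beta>^2 * S r ^ 2 * G 2 r) / r" for r
definition "h1 r = P r / r * Q r" for r
definition "h2 r = - (a + 1) * P r / r^2 * Q r + P r / r * Q1 r" for r

lemma a\<nu>: "a = \<beta> * \<nu>" using \<beta> by (simp add: a_def \<nu>_def)

lemma S_pos: "r > 0 \<Longrightarrow> S r > 0" using \<beta> \<kappa> by (simp add: S_def)

lemma htilde_eq: "htilde d \<beta> \<kappa> r = P r * G 0 r"
proof -
  have "-(real d - 2) / 2 = - a" unfolding a_def by linarith
  then show ?thesis unfolding htilde_def by (simp add: P_def G_def GG0 S_def \<nu>_def)
qed

lemma dS: "r > 0 \<Longrightarrow> (S has_real_derivative - \<beta> * S r / r) (at r)"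
proof -
  assume r: "r > 0"
  have Se: "S = (\<lambda>r. sqrt \<kappa> / \<beta> * r powr (- \<beta>))"
    by (rule ext) (simp add: S_def powr_minus divide_inverse)
  have "((\<lambda>r. sqrt \<kappa> / \<beta> * r powr (- \<beta>)) has_real_derivative sqrt \<kappa> / \<beta> * (- \<beta> * r powr (- \<beta>) / r)) (at r)"
    by (rule DERIV_cmult[OF powr_deriv[OF r]])
  moreover have "sqrt \<kappa> / \<beta> * (- \<beta> * r powr (- \<beta>) / r) = - \<beta> * S r / r"
    unfolding Se using \<beta> by simp
  ultimately show ?thesis unfolding Se by simp
qed

lemma dG: "r > 0 \<Longrightarrow> (G k has_real_derivative G (Suc k) r * \<beta> * S r / r) (at r)"
proof -
  assume r: "r > 0"
  have "((\<lambda>r. GG \<nu> k (S r)) has_real_derivative - GG \<nu> (Suc k) (S r) * (- \<beta> * S r / r)) (at r)"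
    by (rule DERIV_chain2[OF GG_deriv[OF S_pos[OF r]] dS[OF r]])
  then show ?thesis unfolding G_def[abs_def] by (simp add: mult.assoc)
qed

lemma dP: "r > 0 \<Longrightarrow> (P has_real_derivative - a * P r / r) (at r)"
  unfolding P_def[abs_def] using powr_deriv[of r "-a"] by simp

lemma dh: "r > 0 \<Longrightarrow> ((\<lambda>r. P r * G 0 r) has_real_derivative h1 r) (at r)"
proof -
  assume r: "r > 0"
  show ?thesis
    using DERIV_mult[OF dP[OF r] dG[OF r, of 0]] r
    by (simp add: h1_def Q_def field_simps)
qed

lemma dQ: "r > 0 \<Longrightarrow> (Q has_real_derivative Q1 r) (at r)"
proof -
  assume r: "r > 0"
  have "((\<lambda>r. - a * G 0 r + \<beta> * S r * G 1 r) has_real_derivative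
     - a * (G 1 r * \<beta> * S r / r) + (\<beta> * (- \<beta> * S r / r) * G 1 r + \<beta> * S r * (G 2 r * \<beta> * S r / r))) (at r)"
  proof -
    have g0: "(G 0 has_real_derivative G 1 r * \<beta> * S r / r) (at r)" using dG[OF r, of 0] by simp
    have g1: "(G 1 has_real_derivative G 2 r * \<beta> * S r / r) (at r)" using dG[OF r, of 1] by (simp add: numeral_2_eq_2)
    have t1: "((\<lambda>x. -a * G 0 x) has_real_derivative -a * (G 1 r * \<beta> * S r / r)) (at r)"
      by (rule DERIV_cmult[OF g0])
    have t2: "((\<lambda>x. \<beta> * S x * G 1 x) has_real_derivative
        (\<beta> * (- \<beta> * S r / r)) * G 1 r + (G 2 r * \<beta> * S r / r) * (\<beta> * S r)) (at r)"
      by (rule DERIV_mult[OF DERIV_cmult[OF dS[OF r]] g1])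
    show ?thesis using DERIV_add[OF t1 t2] by (simp add: algebra_simps)
  qed
  moreover have "- a * (G 1 r * \<beta> * S r / r) + (\<beta> * (- \<beta> * S r / r) * G 1 r + \<beta> * S r * (G 2 r * \<beta> * S r / r)) = Q1 r"
    unfolding Q1_def using r by (simp add: field_simps power2_eq_square)
  ultimately show ?thesis unfolding Q_def[abs_def] by simp
qed

lemma dh1: "r > 0 \<Longrightarrow> (h1 has_real_derivative h2 r) (at r)"
proof -
  assume r: "r > 0"
  have "((\<lambda>r. P r / r) has_real_derivative ((- a * P r / r) * r - P r * 1) / (r * r)) (at r)"
    using DERIV_divide[OF dP[OF r] DERIV_ident] r by simp
  from DERIV_mult[OF this dQ[OF r]] show ?thesis
    unfolding h1_def[abs_def] h2_def using r by (simp add: field_simps power2_eq_square)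
qed

lemma ode: "r > 0 \<Longrightarrow> h2 r + (2 * a + 1) / r * h1 r = \<kappa> * r powr (-2 - 2*\<beta>) * (P r * G 0 r)"
proof -
  assume r: "r > 0"
  have o: "S r ^ 2 * (G 2 r - G 0 r) - S r * G 1 r - \<nu>^2 * G 0 r = 0"
    using GG_ode[OF S_pos[OF r], of \<nu>] by (simp add: G_def)
  have "h2 r + (2 * a + 1) / r * h1 r = P r / r^2 * (-(a^2) * G 0 r - \<beta>^2 * S r * G 1 r + \<beta>^2 * S r^2 * G 2 r)"
    unfolding h1_def h2_def Q_def Q1_def using r by (simp add: field_simps power2_eq_square)
  also have "-(a^2) * G 0 r - \<beta>^2 * S r * G 1 r + \<beta>^2 * S r^2 * G 2 r = \<beta>^2 * S r^2 * G 0 r"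
  proof -
    have "\<beta>^2 * (S r ^ 2 * (G 2 r - G 0 r) - S r * G 1 r - \<nu>^2 * G 0 r) = 0" using o by simp
    then show ?thesis unfolding a\<nu> by (simp add: algebra_simps power2_eq_square)
  qed
  also have "\<beta>^2 * S r^2 = \<kappa> / (r powr \<beta>)^2"
    using \<beta> \<kappa> r by (simp add: S_def power_divide power_mult_distrib)
  finally have e: "h2 r + (2 * a + 1) / r * h1 r = P r / r^2 * (\<kappa> / (r powr \<beta>)^2 * G 0 r)" .
  have w: "r powr (-2 - 2*\<beta>) = 1 / (r^2 * (r powr \<beta>)^2)"
    using r by (simp add: powr_diff powr_add power2_eq_square powr_minus divide_simps flip: powr_add)
  show ?thesis unfolding e w using r by (simp add: field_simps)
qed

end


context bes begin

lemma G_nonneg: "G k r \<ge> 0"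
  unfolding G_def GG_def set_lebesgue_integral_def
  by (intro Bochner_Integration.integral_nonneg) (simp add: EE_nonneg)

lemma G01: "r > 0 \<Longrightarrow> G 0 r \<le> G 1 r"
  unfolding G_def GG_def using S_pos[of r]
  by (intro set_integral_mono EE_integrable) (auto simp: EE_def cosh_real_ge_1)

lemma P_pos: "r > 0 \<Longrightarrow> P r > 0" by (simp add: P_def)

lemma lap_formula:
  fixes x :: "'a::euclidean_space"
  assumes dim: "DIM('a) = d" and x: "x \<noteq> 0"
  defines "r \<equiv> norm x"
  shows "laplacian (\<lambda>y. (c0 + c1 * norm y powr \<gamma>) * htilde d \<beta> \<kappa> (norm y)) x
    = (c0 + c1 * r powr \<gamma>) * (\<kappa> * r powr (-2 - 2*\<beta>) * (P r * G 0 r))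
      + 2 * (c1 * (\<gamma> * r powr \<gamma> / r)) * h1 r
      + (P r * G 0 r) * (c1 * \<gamma> * (\<gamma> + 2 * a) * r powr \<gamma> / r^2)"
proof -
  define f where "f r = c0 + c1 * r powr \<gamma>" for r
  define f1 where "f1 r = c1 * (\<gamma> * r powr \<gamma> / r)" for r
  define f2 where "f2 r = c1 * (\<gamma> * (\<gamma> - 1) * r powr \<gamma> / r^2)" for r
  define H where "H r = P r * G 0 r" for r
  have df: "(f has_real_derivative f1 r) (at r)" if "r > 0" for r
    unfolding f_def[abs_def] f1_def using DERIV_add[OF DERIV_const DERIV_cmult[OF powr_deriv[OF that]], of c0 c1 \<gamma>]
    by simp
  have df1: "(f1 has_real_derivative f2 r) (at r)" if "r > 0" for r
  proof -
    have "((\<lambda>r. r powr \<gamma> / r) has_real_derivative ((\<gamma> * r powr \<gamma> / r) * r - r powr \<gamma> * 1) / (r * r)) (at r)"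
      using DERIV_divide[OF powr_deriv[OF that] DERIV_ident] that by simp
    from DERIV_cmult[OF this, of "c1 * \<gamma>"] show ?thesis
      unfolding f1_def[abs_def] f2_def using that by (simp add: field_simps power2_eq_square)
  qed
  have u: "(\<lambda>y. (c0 + c1 * norm y powr \<gamma>) * htilde d \<beta> \<kappa> (norm y)) = (\<lambda>y. (\<lambda>r. f r * H r) (norm y))"
    by (simp add: f_def H_def htilde_eq)
  have r: "r > 0" using x by (simp add: r_def)
  have dH: "(H has_real_derivative h1 r) (at r)" if "r > 0" for r
    using dh[OF that] unfolding H_def[abs_def] .
  have "laplacian (\<lambda>y. (\<lambda>r. f r * H r) (norm y)) x
      = (f2 r * H r + 2 * f1 r * h1 r + f r * h2 r) + (real DIM('a) - 1) / r * (f1 r * H r + f r * h1 r)"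
    unfolding r_def
  proof (rule laplacian_radial[OF x])
    show "((\<lambda>r. f r * H r) has_real_derivative f1 r * H r + f r * h1 r) (at r)" if "r > 0" for r
      using prod_derivs(1)[of f f1 r f2 H h1 h2, OF df[OF that] df1[OF that] dH[OF that] dh1[OF that]] .
    show "((\<lambda>r. f1 r * H r + f r * h1 r) has_real_derivative f2 r * H r + 2 * f1 r * h1 r + f r * h2 r) (at r)" if "r > 0" for r
      using prod_derivs(2)[of f f1 r f2 H h1 h2, OF df[OF that] df1[OF that] dH[OF that] dh1[OF that]] .
  qed
  also have "\<dots> = f r * (h2 r + (2 * a + 1) / r * h1 r) + 2 * f1 r * h1 r + H r * (f2 r + (2 * a + 1) / r * f1 r)"
  proof -
    have "real DIM('a) - 1 = 2 * a + 1" unfolding a_def dim by (simp add: field_simps)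
    then show ?thesis by (simp add: algebra_simps)
  qed
  also have "\<dots> = (c0 + c1 * r powr \<gamma>) * (\<kappa> * r powr (-2 - 2*\<beta>) * (P r * G 0 r))
      + 2 * (c1 * (\<gamma> * r powr \<gamma> / r)) * h1 r
      + (P r * G 0 r) * (c1 * \<gamma> * (\<gamma> + 2 * a) * r powr \<gamma> / r^2)"
    unfolding ode[OF r] using r by (simp add: f_def f1_def f2_def H_def field_simps power2_eq_square)
  finally show ?thesis unfolding u .
qed


lemma lin1:
  fixes A B TH Z E Q M VfH F CfH CH :: real
  shows "A \<le> B \<Longrightarrow> B = -2 * TH + 2 * Z \<Longrightarrow> E = - Q - 2 * Z \<Longrightarrow> 0 \<le> Q \<Longrightarrow> M \<le> VfH \<Longrightarrow>
    M = F - CfH \<Longrightarrow> CfH \<le> 2 * CH \<Longrightarrow> CH \<le> TH \<Longrightarrow> F + A + E - VfH \<le> 0"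
  by linarith

lemma lin2:
  fixes A B TH Z E Q M VfH F CfH CH :: real
  shows "B \<le> A \<Longrightarrow> B = 2 * TH - 2 * Z \<Longrightarrow> E = Q + 2 * Z \<Longrightarrow> 0 \<le> Q \<Longrightarrow> VfH \<le> M \<Longrightarrow>
    M = F + CfH \<Longrightarrow> CfH \<le> 2 * CH \<Longrightarrow> CH \<le> TH \<Longrightarrow> 0 \<le> F + A + E - VfH"
  by linarith

lemma key_bound:
  assumes "0 < \<gamma>" "C > 0" "\<beta> = \<beta>' + 2 * \<gamma>"
  obtains R where "0 < R" "R \<le> 1"
    "\<And>r. 0 < r \<Longrightarrow> r \<le> R \<Longrightarrow> C * r powr (-2-\<beta>') \<le> \<gamma> * r powr \<gamma> * (\<beta> * S r) / r^2"
proof -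
  define K0 where "K0 = \<gamma> * sqrt \<kappa> / C"
  have K0: "K0 > 0" using assms \<kappa> by (simp add: K0_def)
  define R where "R = min 1 (K0 powr (1/\<gamma>))"
  have R: "0 < R" "R \<le> 1" using K0 by (auto simp: R_def)
  show ?thesis
  proof (rule that[OF R])
    fix r :: real assume r: "0 < r" "r \<le> R"
    define \<rho> where "\<rho> = r powr \<gamma>"
    define X where "X = r powr \<beta>'"
    have \<rho>: "\<rho> > 0" "X > 0" using r by (auto simp: \<rho>_def X_def)
    have "\<rho> \<le> R powr \<gamma>" unfolding \<rho>_def using r assms by (intro powr_mono2) auto
    also have "\<dots> \<le> (K0 powr (1/\<gamma>)) powr \<gamma>" using R assms K0 by (intro powr_mono2) (auto simp: R_def)
    also have "\<dots> = K0" using assms K0 by (simp add: powr_powr)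
    finally have "\<rho> \<le> K0" .
    then have CK: "C * \<rho> \<le> \<gamma> * sqrt \<kappa>" using assms by (simp add: K0_def field_simps)
    have rb: "r powr \<beta> = X * \<rho> * \<rho>" unfolding assms(3) X_def \<rho>_def using r by (simp add: powr_add flip: powr_add[of r \<gamma> \<gamma>])
    have w: "r powr (-2-\<beta>') = 1 / (r^2 * X)"
      unfolding X_def using r by (simp add: powr_diff powr_minus divide_simps flip: powr_add)
    have "C * r powr (-2-\<beta>') = (C * \<rho>) / (\<rho> * r^2 * X)" unfolding w using \<rho> by simp
    also have "\<dots> \<le> (\<gamma> * sqrt \<kappa>) / (\<rho> * r^2 * X)" using CK \<rho> r by (intro divide_right_mono) auto
    also have "\<dots> = \<gamma> * r powr \<gamma> * (\<beta> * S r) / r^2"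
      unfolding S_def rb \<rho>_def[symmetric] using \<rho> r \<beta> by (simp add: field_simps power2_eq_square)
    finally show "C * r powr (-2-\<beta>') \<le> \<gamma> * r powr \<gamma> * (\<beta> * S r) / r^2" .
  qed
qed


lemma htilde_nonneg: "r > 0 \<Longrightarrow> htilde d \<beta> \<kappa> r \<ge> 0"
  unfolding htilde_eq using P_pos[of r] G_nonneg[of 0 r] by simp

lemma h1_lower: "r > 0 \<Longrightarrow> h1 r \<ge> (\<beta> * S r - a) * (P r * G 0 r) / r"
proof -
  assume r: "r > 0"
  have "\<beta> * S r * G 0 r \<le> \<beta> * S r * G 1 r"
    using G01[OF r] S_pos[OF r] \<beta> by (intro mult_left_mono) auto
  then have "(\<beta> * S r - a) * G 0 r \<le> Q r" by (simp add: Q_def algebra_simps)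
  then have "P r / r * ((\<beta> * S r - a) * G 0 r) \<le> P r / r * Q r"
    using P_pos[OF r] r by (intro mult_left_mono) auto
  then show ?thesis by (simp add: h1_def mult.left_commute)
qed

lemma part_a:
  assumes "0 < r" "r \<le> 1" "\<gamma> > 0"
  shows "htilde d \<beta> \<kappa> r \<le> (2 - r powr \<gamma>) * htilde d \<beta> \<kappa> r \<and> (2 - r powr \<gamma>) * htilde d \<beta> \<kappa> r \<le> 2 * htilde d \<beta> \<kappa> r"
    "htilde d \<beta> \<kappa> r \<le> (1 + r powr \<gamma>) * htilde d \<beta> \<kappa> r \<and> (1 + r powr \<gamma>) * htilde d \<beta> \<kappa> r \<le> 2 * htilde d \<beta> \<kappa> r"
proof -
  have h: "htilde d \<beta> \<kappa> r \<ge> 0" using assms by (intro htilde_nonneg)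
  have \<rho>: "0 \<le> r powr \<gamma>" "r powr \<gamma> \<le> 1" using assms by (auto intro: powr_le1)
  have m: "\<And>c e. c \<le> e \<Longrightarrow> c * htilde d \<beta> \<kappa> r \<le> e * htilde d \<beta> \<kappa> r"
    using h by (simp add: mult_right_mono)
  show "htilde d \<beta> \<kappa> r \<le> (2 - r powr \<gamma>) * htilde d \<beta> \<kappa> r \<and> (2 - r powr \<gamma>) * htilde d \<beta> \<kappa> r \<le> 2 * htilde d \<beta> \<kappa> r"
    using m[of 1 "2 - r powr \<gamma>"] m[of "2 - r powr \<gamma>" 2] \<rho> by auto
  show "htilde d \<beta> \<kappa> r \<le> (1 + r powr \<gamma>) * htilde d \<beta> \<kappa> r \<and> (1 + r powr \<gamma>) * htilde d \<beta> \<kappa> r \<le> 2 * htilde d \<beta> \<kappa> r"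
    using m[of 1 "1 + r powr \<gamma>"] m[of "1 + r powr \<gamma>" 2] \<rho> by auto
qed

lemma part_b1:
  fixes x :: "'a::euclidean_space" and V :: "'a \<Rightarrow> real"
  assumes dim: "DIM('a) = d" and x: "x \<noteq> 0" "norm x \<le> 1" and \<gamma>: "\<gamma> > 0"
    and Vx: "V x \<ge> \<kappa> * norm x powr (-2 - 2*\<beta>) - C * norm x powr (-2 - \<beta>')"
    and C: "C > 0"
    and kb: "C * norm x powr (-2-\<beta>') \<le> \<gamma> * norm x powr \<gamma> * (\<beta> * S (norm x)) / (norm x)^2"
  shows "laplacian (\<lambda>y. (2 - norm y powr \<gamma>) * htilde d \<beta> \<kappa> (norm y)) x
           - V x * ((2 - norm x powr \<gamma>) * htilde d \<beta> \<kappa> (norm x)) \<le> 0"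
proof -
  define r where "r = norm x"
  have r: "r > 0" using x by (simp add: r_def)
  define \<rho> where "\<rho> = r powr \<gamma>"
  define H where "H = P r * G 0 r"
  define W where "W = r powr (-2 - 2*\<beta>)"
  define W' where "W' = r powr (-2 - \<beta>')"
  define T where "T = \<gamma> * \<rho> * (\<beta> * S r) / r^2"
  define f where "f = 2 - \<rho>"
  have H0: "H \<ge> 0" using P_pos[OF r] G_nonneg[of 0 r] by (simp add: H_def)
  have \<rho>0: "\<rho> > 0" using r by (simp add: \<rho>_def)
  have htH: "htilde d \<beta> \<kappa> r = H" by (simp add: htilde_eq H_def)
  have fq: "(\<lambda>y. (2 - norm y powr \<gamma>) * htilde d \<beta> \<kappa> (norm y)) = (\<lambda>y. (2 + -1 * norm y powr \<gamma>) * htilde d \<beta> \<kappa> (norm y))"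
    by simp
  have L: "laplacian (\<lambda>y. (2 - norm y powr \<gamma>) * htilde d \<beta> \<kappa> (norm y)) x
     = f * (\<kappa> * W * H) + 2 * (-1 * (\<gamma> * \<rho> / r)) * h1 r + H * (-1 * \<gamma> * (\<gamma> + 2 * a) * \<rho> / r^2)"
    unfolding fq lap_formula[OF dim x(1)] by (simp add: r_def f_def \<rho>_def W_def H_def)
  have i1: "2 * (-1 * (\<gamma> * \<rho> / r)) * h1 r \<le> 2 * (-1 * (\<gamma> * \<rho> / r)) * ((\<beta> * S r - a) * H / r)"
    using h1_lower[OF r] \<gamma> \<rho>0 r unfolding H_def by (intro mult_left_mono_neg) auto
  have i1': "2 * (-1 * (\<gamma> * \<rho> / r)) * ((\<beta> * S r - a) * H / r) = -2 * (T * H) + 2 * (\<gamma> * \<rho> * a * H / r^2)"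
    unfolding T_def using r by (simp add: field_simps power2_eq_square)
  have i2: "H * (-1 * \<gamma> * (\<gamma> + 2 * a) * \<rho> / r^2) = - (\<gamma>^2 * \<rho> * H / r^2) - 2 * (\<gamma> * \<rho> * a * H / r^2)"
    using r by (simp add: field_simps power2_eq_square)
  have i3: "\<gamma>^2 * \<rho> * H / r^2 \<ge> 0" using H0 \<rho>0 by simp
  have "\<rho> \<le> 1" unfolding \<rho>_def using x r \<gamma> by (intro powr_le1) (auto simp: r_def)
  then have f1: "f \<ge> 1" "f \<le> 2" using \<rho>0 unfolding f_def by auto
  have fH: "f * H \<ge> 0" using f1 H0 by simp
  have VfH: "V x * ((2 - norm x powr \<gamma>) * htilde d \<beta> \<kappa> (norm x)) = V x * (f * H)"
    using htH by (simp add: f_def \<rho>_def r_def)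
  have i4: "V x * (f * H) \<ge> (\<kappa> * W - C * W') * (f * H)"
    using Vx fH unfolding W_def W'_def r_def by (intro mult_right_mono) auto
  have i5: "(\<kappa> * W - C * W') * (f * H) = f * (\<kappa> * W * H) - C * W' * (f * H)" by (simp add: algebra_simps)
  have CWH: "C * W' * H \<ge> 0" using C H0 by (simp add: W'_def)
  have i6: "C * W' * (f * H) \<le> 2 * (C * W' * H)"
    using mult_right_mono[OF f1(2) CWH] by (simp add: algebra_simps)
  have i7: "C * W' * H \<le> T * H"
    using kb H0 unfolding T_def W'_def \<rho>_def r_def by (intro mult_right_mono) auto
  show ?thesis unfolding L VfH by (rule lin1[OF i1 i1' i2 i3 i4 i5 i6 i7])
qed

lemma part_b2:
  fixes x :: "'a::euclidean_space" and V :: "'a \<Rightarrow> real"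
  assumes dim: "DIM('a) = d" and x: "x \<noteq> 0" "norm x \<le> 1" and \<gamma>: "\<gamma> > 0"
    and Vx: "V x \<le> \<kappa> * norm x powr (-2 - 2*\<beta>) + C * norm x powr (-2 - \<beta>')"
    and C: "C > 0"
    and kb: "C * norm x powr (-2-\<beta>') \<le> \<gamma> * norm x powr \<gamma> * (\<beta> * S (norm x)) / (norm x)^2"
  shows "laplacian (\<lambda>y. (1 + norm y powr \<gamma>) * htilde d \<beta> \<kappa> (norm y)) x
           - V x * ((1 + norm x powr \<gamma>) * htilde d \<beta> \<kappa> (norm x)) \<ge> 0"
proof -
  define r where "r = norm x"
  have r: "r > 0" using x by (simp add: r_def)
  define \<rho> where "\<rho> = r powr \<gamma>"
  define H where "H = P r * G 0 r"
  define W where "W = r powr (-2 - 2*\<beta>)"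
  define W' where "W' = r powr (-2 - \<beta>')"
  define T where "T = \<gamma> * \<rho> * (\<beta> * S r) / r^2"
  define f where "f = 1 + \<rho>"
  have H0: "H \<ge> 0" using P_pos[OF r] G_nonneg[of 0 r] by (simp add: H_def)
  have \<rho>0: "\<rho> > 0" using r by (simp add: \<rho>_def)
  have htH: "htilde d \<beta> \<kappa> r = H" by (simp add: htilde_eq H_def)
  have fq: "(\<lambda>y. (1 + norm y powr \<gamma>) * htilde d \<beta> \<kappa> (norm y)) = (\<lambda>y. (1 + 1 * norm y powr \<gamma>) * htilde d \<beta> \<kappa> (norm y))"
    by simp
  have L: "laplacian (\<lambda>y. (1 + norm y powr \<gamma>) * htilde d \<beta> \<kappa> (norm y)) x
     = f * (\<kappa> * W * H) + 2 * (1 * (\<gamma> * \<rho> / r)) * h1 r + H * (1 * \<gamma> * (\<gamma> + 2 * a) * \<rho> / r^2)"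
    unfolding fq lap_formula[OF dim x(1)] by (simp add: r_def f_def \<rho>_def W_def H_def)
  have i1: "2 * (1 * (\<gamma> * \<rho> / r)) * h1 r \<ge> 2 * (1 * (\<gamma> * \<rho> / r)) * ((\<beta> * S r - a) * H / r)"
    using h1_lower[OF r] \<gamma> \<rho>0 r unfolding H_def by (intro mult_left_mono) auto
  have i1': "2 * (1 * (\<gamma> * \<rho> / r)) * ((\<beta> * S r - a) * H / r) = 2 * (T * H) - 2 * (\<gamma> * \<rho> * a * H / r^2)"
    unfolding T_def using r by (simp add: field_simps power2_eq_square)
  have i2: "H * (1 * \<gamma> * (\<gamma> + 2 * a) * \<rho> / r^2) = (\<gamma>^2 * \<rho> * H / r^2) + 2 * (\<gamma> * \<rho> * a * H / r^2)"
    using r by (simp add: field_simps power2_eq_square)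
  have i3: "\<gamma>^2 * \<rho> * H / r^2 \<ge> 0" using H0 \<rho>0 by simp
  have "\<rho> \<le> 1" unfolding \<rho>_def using x r \<gamma> by (intro powr_le1) (auto simp: r_def)
  then have f1: "f \<ge> 1" "f \<le> 2" using \<rho>0 unfolding f_def by auto
  have fH: "f * H \<ge> 0" using f1 H0 by simp
  have VfH: "V x * ((1 + norm x powr \<gamma>) * htilde d \<beta> \<kappa> (norm x)) = V x * (f * H)"
    using htH by (simp add: f_def \<rho>_def r_def)
  have i4: "V x * (f * H) \<le> (\<kappa> * W + C * W') * (f * H)"
    using Vx fH unfolding W_def W'_def r_def by (intro mult_right_mono) auto
  have i5: "(\<kappa> * W + C * W') * (f * H) = f * (\<kappa> * W * H) + C * W' * (f * H)" by (simp add: algebra_simps)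
  have CWH: "C * W' * H \<ge> 0" using C H0 by (simp add: W'_def)
  have i6: "C * W' * (f * H) \<le> 2 * (C * W' * H)"
    using mult_right_mono[OF f1(2) CWH] by (simp add: algebra_simps)
  have i7: "C * W' * H \<le> T * H"
    using kb H0 unfolding T_def W'_def \<rho>_def r_def by (intro mult_right_mono) auto
  show ?thesis unfolding L VfH by (rule lin2[OF i1 i1' i2 i3 i4 i5 i6 i7])
qed

end

theorem lemma3p5:
  fixes V :: "'a::euclidean_space \<Rightarrow> real" and \<beta> \<kappa> :: real
  assumes "\<beta> > 0" and "\<kappa> > 0" and "admissible_potential V"
  shows
   "(\<forall>\<beta>' C\<^sub>1. 0 < \<beta>' \<and> \<beta>' < \<beta> \<and> C\<^sub>1 > 0 \<and>
       (\<forall>x. 0 < norm x \<and> norm x \<le> 1 \<longrightarrow>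
          V x \<ge> \<kappa> * norm x powr (-2 - 2*\<beta>) - C\<^sub>1 * norm x powr (-2 - \<beta>'))
     \<longrightarrow>
       (let u\<^sub>1 = (\<lambda>r. (2 - r powr ((\<beta> - \<beta>') / 2)) * htilde DIM('a) \<beta> \<kappa> r) in
         (\<forall>x::'a. x \<noteq> 0 \<and> norm x \<le> 1 \<longrightarrow>
            htilde DIM('a) \<beta> \<kappa> (norm x) \<le> u\<^sub>1 (norm x) \<and>
            u\<^sub>1 (norm x) \<le> 2 * htilde DIM('a) \<beta> \<kappa> (norm x)) \<and>
         (\<exists>R\<^sub>1. 0 < R\<^sub>1 \<and> R\<^sub>1 \<le> 1 \<and>
            (\<forall>x. x \<noteq> 0 \<and> norm x \<le> R\<^sub>1 \<longrightarrow>
               laplacian (\<lambda>y. u\<^sub>1 (norm y)) x - V x * u\<^sub>1 (norm x) \<le> 0))))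
    \<and>
    (\<forall>\<beta>' C\<^sub>2. 0 < \<beta>' \<and> \<beta>' < \<beta> \<and> C\<^sub>2 > 0 \<and>
       (\<forall>x. 0 < norm x \<and> norm x \<le> 1 \<longrightarrow>
          V x \<le> \<kappa> * norm x powr (-2 - 2*\<beta>) + C\<^sub>2 * norm x powr (-2 - \<beta>'))
     \<longrightarrow>
       (let u\<^sub>2 = (\<lambda>r. (1 + r powr ((\<beta> - \<beta>') / 2)) * htilde DIM('a) \<beta> \<kappa> r) in
         (\<forall>x::'a. x \<noteq> 0 \<and> norm x \<le> 1 \<longrightarrow>
            htilde DIM('a) \<beta> \<kappa> (norm x) \<le> u\<^sub>2 (norm x) \<and>
            u\<^sub>2 (norm x) \<le> 2 * htilde DIM('a) \<beta> \<kappa> (norm x)) \<and>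
         (\<exists>R\<^sub>2. 0 < R\<^sub>2 \<and> R\<^sub>2 \<le> 1 \<and>
            (\<forall>x. x \<noteq> 0 \<and> norm x \<le> R\<^sub>2 \<longrightarrow>
               laplacian (\<lambda>y. u\<^sub>2 (norm y)) x - V x * u\<^sub>2 (norm x) \<ge> 0))))"
  proof -
  interpret bes "DIM('a)" \<beta> \<kappa> using assms by unfold_locales
  show ?thesis
  proof (intro conjI allI impI)
    fix \<beta>' C\<^sub>1
    assume H: "0 < \<beta>' \<and> \<beta>' < \<beta> \<and> C\<^sub>1 > 0 \<and>
       (\<forall>x. 0 < norm x \<and> norm x \<le> 1 \<longrightarrow>
          V x \<ge> \<kappa> * norm x powr (-2 - 2*\<beta>) - C\<^sub>1 * norm x powr (-2 - \<beta>'))"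
    define \<gamma> where "\<gamma> = (\<beta> - \<beta>') / 2"
    have \<gamma>: "\<gamma> > 0" using H by (simp add: \<gamma>_def)
    have bb: "\<beta> = \<beta>' + 2 * \<gamma>" unfolding \<gamma>_def by argo
    have C: "C\<^sub>1 > 0" using H by simp
    obtain R where R: "0 < R" "R \<le> 1"
      "\<And>r. 0 < r \<Longrightarrow> r \<le> R \<Longrightarrow> C\<^sub>1 * r powr (-2-\<beta>') \<le> \<gamma> * r powr \<gamma> * (\<beta> * S r) / r^2"
      using key_bound[OF \<gamma> C bb] by blast
    have A: "\<forall>x::'a. x \<noteq> 0 \<and> norm x \<le> 1 \<longrightarrow>
            htilde DIM('a) \<beta> \<kappa> (norm x) \<le> (2 - norm x powr \<gamma>) * htilde DIM('a) \<beta> \<kappa> (norm x) \<and>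
            (2 - norm x powr \<gamma>) * htilde DIM('a) \<beta> \<kappa> (norm x) \<le> 2 * htilde DIM('a) \<beta> \<kappa> (norm x)"
      using part_a(1)[OF _ _ \<gamma>] by auto
    have B: "\<exists>R\<^sub>1. 0 < R\<^sub>1 \<and> R\<^sub>1 \<le> 1 \<and>
            (\<forall>x. x \<noteq> 0 \<and> norm x \<le> R\<^sub>1 \<longrightarrow>
               laplacian (\<lambda>y. (2 - norm y powr \<gamma>) * htilde DIM('a) \<beta> \<kappa> (norm y)) x
                - V x * ((2 - norm x powr \<gamma>) * htilde DIM('a) \<beta> \<kappa> (norm x)) \<le> 0)"
    proof (intro exI[of _ R] conjI allI impI R(1,2))
      fix x :: 'a assume x: "x \<noteq> 0 \<and> norm x \<le> R"
      then have x1: "norm x \<le> 1" using R by simp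
      have x0: "x \<noteq> 0" using x by simp
      have Vx: "V x \<ge> \<kappa> * norm x powr (-2 - 2*\<beta>) - C\<^sub>1 * norm x powr (-2 - \<beta>')"
        using H x x1 by auto
      have kb: "C\<^sub>1 * norm x powr (-2-\<beta>') \<le> \<gamma> * norm x powr \<gamma> * (\<beta> * S (norm x)) / (norm x)^2"
        using R(3)[of "norm x"] x by auto
      show "laplacian (\<lambda>y. (2 - norm y powr \<gamma>) * htilde DIM('a) \<beta> \<kappa> (norm y)) x
                - V x * ((2 - norm x powr \<gamma>) * htilde DIM('a) \<beta> \<kappa> (norm x)) \<le> 0"
        using part_b1[where V=V and x=x, OF refl x0 x1 \<gamma> Vx C kb] .
    qed
    show "let u\<^sub>1 = (\<lambda>r. (2 - r powr ((\<beta> - \<beta>') / 2)) * htilde DIM('a) \<beta> \<kappa> r) in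
         (\<forall>x::'a. x \<noteq> 0 \<and> norm x \<le> 1 \<longrightarrow>
            htilde DIM('a) \<beta> \<kappa> (norm x) \<le> u\<^sub>1 (norm x) \<and>
            u\<^sub>1 (norm x) \<le> 2 * htilde DIM('a) \<beta> \<kappa> (norm x)) \<and>
         (\<exists>R\<^sub>1. 0 < R\<^sub>1 \<and> R\<^sub>1 \<le> 1 \<and>
            (\<forall>x. x \<noteq> 0 \<and> norm x \<le> R\<^sub>1 \<longrightarrow>
               laplacian (\<lambda>y. u\<^sub>1 (norm y)) x - V x * u\<^sub>1 (norm x) \<le> 0))"
      unfolding Let_def \<gamma>_def[symmetric] using A B by blast
  next
    fix \<beta>' C\<^sub>2
    assume H: "0 < \<beta>' \<and> \<beta>' < \<beta> \<and> C\<^sub>2 > 0 \<and>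
       (\<forall>x. 0 < norm x \<and> norm x \<le> 1 \<longrightarrow>
          V x \<le> \<kappa> * norm x powr (-2 - 2*\<beta>) + C\<^sub>2 * norm x powr (-2 - \<beta>'))"
    define \<gamma> where "\<gamma> = (\<beta> - \<beta>') / 2"
    have \<gamma>: "\<gamma> > 0" using H by (simp add: \<gamma>_def)
    have bb: "\<beta> = \<beta>' + 2 * \<gamma>" unfolding \<gamma>_def by argo
    have C: "C\<^sub>2 > 0" using H by simp
    obtain R where R: "0 < R" "R \<le> 1"
      "\<And>r. 0 < r \<Longrightarrow> r \<le> R \<Longrightarrow> C\<^sub>2 * r powr (-2-\<beta>') \<le> \<gamma> * r powr \<gamma> * (\<beta> * S r) / r^2"
      using key_bound[OF \<gamma> C bb] by blast
    have A: "\<forall>x::'a. x \<noteq> 0 \<and> norm x \<le> 1 \<longrightarrow>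
            htilde DIM('a) \<beta> \<kappa> (norm x) \<le> (1 + norm x powr \<gamma>) * htilde DIM('a) \<beta> \<kappa> (norm x) \<and>
            (1 + norm x powr \<gamma>) * htilde DIM('a) \<beta> \<kappa> (norm x) \<le> 2 * htilde DIM('a) \<beta> \<kappa> (norm x)"
      using part_a(2)[OF _ _ \<gamma>] by auto
    have B: "\<exists>R\<^sub>2. 0 < R\<^sub>2 \<and> R\<^sub>2 \<le> 1 \<and>
            (\<forall>x. x \<noteq> 0 \<and> norm x \<le> R\<^sub>2 \<longrightarrow>
               laplacian (\<lambda>y. (1 + norm y powr \<gamma>) * htilde DIM('a) \<beta> \<kappa> (norm y)) x
                - V x * ((1 + norm x powr \<gamma>) * htilde DIM('a) \<beta> \<kappa> (norm x)) \<ge> 0)"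
    proof (intro exI[of _ R] conjI allI impI R(1,2))
      fix x :: 'a assume x: "x \<noteq> 0 \<and> norm x \<le> R"
      then have x1: "norm x \<le> 1" using R by simp
      have x0: "x \<noteq> 0" using x by simp
      have Vx: "V x \<le> \<kappa> * norm x powr (-2 - 2*\<beta>) + C\<^sub>2 * norm x powr (-2 - \<beta>')"
        using H x x1 by auto
      have kb: "C\<^sub>2 * norm x powr (-2-\<beta>') \<le> \<gamma> * norm x powr \<gamma> * (\<beta> * S (norm x)) / (norm x)^2"
        using R(3)[of "norm x"] x by auto
      show "laplacian (\<lambda>y. (1 + norm y powr \<gamma>) * htilde DIM('a) \<beta> \<kappa> (norm y)) x
                - V x * ((1 + norm x powr \<gamma>) * htilde DIM('a) \<beta> \<kappa> (norm x)) \<ge> 0"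
        using part_b2[where V=V and x=x, OF refl x0 x1 \<gamma> Vx C kb] .
    qed
    show "let u\<^sub>2 = (\<lambda>r. (1 + r powr ((\<beta> - \<beta>') / 2)) * htilde DIM('a) \<beta> \<kappa> r) in
         (\<forall>x::'a. x \<noteq> 0 \<and> norm x \<le> 1 \<longrightarrow>
            htilde DIM('a) \<beta> \<kappa> (norm x) \<le> u\<^sub>2 (norm x) \<and>
            u\<^sub>2 (norm x) \<le> 2 * htilde DIM('a) \<beta> \<kappa> (norm x)) \<and>
         (\<exists>R\<^sub>2. 0 < R\<^sub>2 \<and> R\<^sub>2 \<le> 1 \<and>
            (\<forall>x. x \<noteq> 0 \<and> norm x \<le> R\<^sub>2 \<longrightarrow>
               laplacian (\<lambda>y. u\<^sub>2 (norm y)) x - V x * u\<^sub>2 (norm x) \<ge> 0))"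
      unfolding Let_def \<gamma>_def[symmetric] using A B by blast
  qed
qed

end
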